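(* Let $L\ge1$, $D\ge1$, a dataset $\{(\mathbf{x}_n,y_n)\}_{n=1}^N\subset\mathbb{R}^D\times\{-1,1\}$, a differentiable loss $\ell(\hat y,y)$, and consider the gradient descent iterates $\mathbf{u}^{(t+1)}=\mathbf{u}^{(t)}-\eta_t\nabla_{\mathbf{u}}\mathcal{L}_{\mathcal{P}_{conv}}(\mathbf{u}^{(t)})$, where $\mathbf{u}=[\mathbf{u}_l]_{l=1}^L$, $\mathbf{u}_l\in\mathbb{R}^D$, and $\mathcal{L}_{\mathcal{P}_{conv}}(\mathbf{u})=\sum_n\ell(\langle\mathbf{x}_n,\mathcal{P}_{conv}(\mathbf{u})\rangle,y_n)$. Let $\hat{\mathbf{u}}^{(t)}=[\hat{\mathbf{u}}^{(t)}_l]_{l=1}^L$ be the Fourier transforms of the $\mathbf{u}^{(t)}_l$. Then for every $l$ and $t$, the update $\Delta\mathbf{u}_l^{(t)}=\mathbf{u}_l^{(t+1)}-\mathbf{u}_l^{(t)}$ satisfies $$\mathcal{F}\Delta\mathbf{u}^{(t)}_l=\hat{\mathbf{u}}^{(t+1)}_l-\hat{\mathbf{u}}^{(t)}_l=-\eta_t\nabla_{\hat{\mathbf{u}}_l}\hat{\mathcal{L}}_{\mathcal{P}_{diag}}(\hat{\mathbf{u}}^{(t)}),$$ where $\hat{\mathcal{L}}_{\mathcal{P}_{diag}}(\hat{\mathbf{u}})=\sum_n\ell(\langle\hat{\mathbf{x}}_n,\mathcal{P}_{diag}(\hat{\mathbf{u}})\rangle,y_n)$ and $\mathcal{P}_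{diag}(\hat{\mathbf{u}})=\hat{\mathbf{u}}_1\odot\cdots\odot\hat{\mathbf{u}}_L$.
   Context: Indices run over $0,\dots,D-1$. $(\mathbf{h}\star\mathbf{u})[d]=\frac{1}{\sqrt D}\sum_{k}\mathbf{u}[k]\mathbf{h}[(d+k)\bmod D]$; $\mathcal{P}_{conv}(\mathbf{u})$ is the vector with $\langle\mathbf{x},\mathcal{P}_{conv}(\mathbf{u})\rangle=((((\mathbf{x}\star\mathbf{u}_1)\star\mathbf{u}_2)\cdots)\star\mathbf{u}_{L-1})^\top\mathbf{u}_L$. $\mathcal{F}\in\mathbb{C}^{D\times D}$ is the DFT matrix $\mathcal{F}[d,p]=\frac{1}{\sqrt D}e^{-2\pi\mathrm{i}dp/D}$ and $\hat{\mathbf{z}}=\mathcal{F}\mathbf{z}$. $\odot$ is the entrywise product. The complex inner product is $\langle\hat{\mathbf{x}},\hat{\mathbf{w}}\rangle=\hat{\mathbf{x}}^\top\hat{\mathbf{w}}^*$ ($^*$ = complex conjugate), so each summand can be written $\ell\big(\hat{\mathbf{u}}_l^{*\top}\mathbf{a}_{n,l},y_n\big)$ with $\mathbf{a}_{n,l}=(\odot_{l'\neq l}\hat{\mathbf{u}}^*_{l'})\odot\hat{\mathbf{x}}_n$; the gradient convention is $\nabla_{\hat{\mathbf{u}}_l}\ell(\hat{\mathbf{u}}_l^{*\top}\mathbf{a},y)=\ell'(\hat{\mathbf{u}}_l^{*\top}\mathbf{a},y)\,\mathbf{a}$, with $\ell'=\partial\ell/\partial\hat y$. *)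

theory Defs
  imports "HOL-Analysis.Analysis"
begin

text \<open>Vectors in R^D / C^D are functions on nat, only the entries 0..D-1 matter.
  Layers are indexed 1..L, data points 1..N.\<close>

definition conv :: "nat \<Rightarrow> (nat \<Rightarrow> real) \<Rightarrow> (nat \<Rightarrow> real) \<Rightarrow> (nat \<Rightarrow> real)" where
  "conv D h u = (\<lambda>d. (1 / sqrt (real D)) * (\<Sum>k<D. u k * h ((d + k) mod D)))"

fun conv_chain :: "nat \<Rightarrow> (nat \<Rightarrow> real) \<Rightarrow> (nat \<Rightarrow> nat \<Rightarrow> real) \<Rightarrow> nat \<Rightarrow> (nat \<Rightarrow> real)" where
  "conv_chain D x u 0 = x"
| "conv_chain D x u (Suc k) = conv D (conv_chain D x u k) (u (Suc k))"

text \<open>The defining value of the inner product <x, P_conv(u)>.\<close>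
definition pconv_inner :: "nat \<Rightarrow> nat \<Rightarrow> (nat \<Rightarrow> real) \<Rightarrow> (nat \<Rightarrow> nat \<Rightarrow> real) \<Rightarrow> real" where
  "pconv_inner D L x u = (\<Sum>d<D. conv_chain D x u (L - 1) d * u L d)"

definition loss_conv ::
  "(real \<Rightarrow> real \<Rightarrow> real) \<Rightarrow> nat \<Rightarrow> (nat \<Rightarrow> nat \<Rightarrow> real) \<Rightarrow> (nat \<Rightarrow> real)
     \<Rightarrow> nat \<Rightarrow> nat \<Rightarrow> (nat \<Rightarrow> nat \<Rightarrow> real) \<Rightarrow> real" where
  "loss_conv lossf N X Y D L u = (\<Sum>n=1..N. lossf (pconv_inner D L (X n) u) (Y n))"

definition grad_conv ::
  "(real \<Rightarrow> real \<Rightarrow> real) \<Rightarrow> nat \<Rightarrow> (nat \<Rightarrow> nat \<Rightarrow> real) \<Rightarrow> (nat \<Rightarrow> real)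
     \<Rightarrow> nat \<Rightarrow> nat \<Rightarrow> (nat \<Rightarrow> nat \<Rightarrow> real) \<Rightarrow> nat \<Rightarrow> nat \<Rightarrow> real" where
  "grad_conv lossf N X Y D L u l d =
     deriv (\<lambda>s. loss_conv lossf N X Y D L (u(l := (u l)(d := u l d + s)))) 0"

definition dft :: "nat \<Rightarrow> (nat \<Rightarrow> complex) \<Rightarrow> (nat \<Rightarrow> complex)" where
  "dft D z = (\<lambda>d. \<Sum>p<D. (cis (- 2 * pi * real d * real p / real D) / complex_of_real (sqrt (real D))) * z p)"

definition cvec :: "(nat \<Rightarrow> real) \<Rightarrow> (nat \<Rightarrow> complex)" where
  "cvec z = (\<lambda>d. complex_of_real (z d))"

definition avec :: "nat \<Rightarrow> nat \<Rightarrow> (nat \<Rightarrow> complex) \<Rightarrow> (nat \<Rightarrow> nat \<Rightarrow> complex) \<Rightarrow> nat \<Rightarrow> (nat \<Rightarrow> complex)" where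
  "avec D L xh uh l = (\<lambda>p. (\<Prod>l'\<in>{1..L} - {l}. cnj (uh l' p)) * xh p)"

text \<open>Gradient of hat L_{P_diag} w.r.t. uhat_l under the stated convention:
  grad of l(uhat_l^{*T} a, y) is l'(uhat_l^{*T} a, y) a, with l' = d l / d yhat.
  The (real-valued) prediction uhat_l^{*T} a is fed to l' via its real part.\<close>
definition grad_diag ::
  "(real \<Rightarrow> real \<Rightarrow> real) \<Rightarrow> nat \<Rightarrow> (nat \<Rightarrow> nat \<Rightarrow> real) \<Rightarrow> (nat \<Rightarrow> real)
     \<Rightarrow> nat \<Rightarrow> nat \<Rightarrow> (nat \<Rightarrow> nat \<Rightarrow> complex) \<Rightarrow> nat \<Rightarrow> nat \<Rightarrow> complex" where
  "grad_diag lossf N X Y D L uh l p =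
     (\<Sum>n=1..N.
        let a = avec D L (dft D (cvec (X n))) uh l in
        complex_of_real (deriv (\<lambda>z. lossf z (Y n)) (Re (\<Sum>q<D. cnj (uh l q) * a q))) * a p)"

end

theory Submission
  imports Defs
begin


definition E :: "nat \<Rightarrow> nat \<Rightarrow> nat \<Rightarrow> complex" where
  "E D p d = cis (- 2 * pi * real p * real d / real D) / complex_of_real (sqrt (real D))"

lemma dft_E: "dft D z q = (\<Sum>k<D. E D q k * z k)"
  by (simp add: dft_def E_def)

lemma E_sym: "E D p d = E D d p"
  by (simp add: E_def mult_ac)

lemma cis_shift_int: "cis (x + 2 * pi * real_of_int n) = cis x"
proof -
  have "cis (x + 2 * pi * real_of_int n) = cis x * cis (2 * pi * real_of_int n)"
    by (rule cis_mult[symmetric])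
  also have "cis (2 * pi * real_of_int n) = 1"
    by (rule cis_multiple_2pi) (rule Ints_of_int)
  finally show ?thesis by (simp only: mult_1_right)
qed

lemma geo_zero:
  assumes D: "D > 0" and nd: "\<not> int D dvd m"
  shows "(\<Sum>p<D. cis (2 * pi * real_of_int m * real p / real D)) = 0"
proof -
  define z where "z = cis (2 * pi * real_of_int m / real D)"
  have z1: "z \<noteq> 1"
  proof
    assume "z = 1"
    then have "cos (2 * pi * real_of_int m / real D) = 1"
      by (simp add: z_def complex_eq_iff)
    then obtain k :: int where k: "2 * pi * real_of_int m / real D = real_of_int k * 2 * pi"
      using cos_one_2pi_int by blast
    then have "real_of_int m = real D * real_of_int k" using D by (simp add: field_simps)
    then have "real_of_int m = real_of_int (int D * k)" by simp
    then have "m = int D * k" by (simp only: of_int_eq_iff)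
    then show False using nd by simp
  qed
  have "z ^ D = cis (real D * (2 * pi * real_of_int m / real D))"
    unfolding z_def by (rule Complex.DeMoivre)
  also have "\<dots> = cis (2 * pi * real_of_int m)" using D by simp
  also have "\<dots> = 1" by (rule cis_multiple_2pi) simp
  finally have zD: "z ^ D = 1" .
  have "(\<Sum>p<D. cis (2 * pi * real_of_int m * real p / real D)) = (\<Sum>p<D. z ^ p)"
    by (intro sum.cong refl) (simp add: z_def Complex.DeMoivre mult_ac)
  also have "\<dots> = 0" using z1 zD by (simp add: geometric_sum)
  finally show ?thesis .
qed

lemma E_prod:
  assumes D: "D > 0"
  shows "E D p a * cnj (E D p b) = cis (2 * pi * real_of_int (int b - int a) * real p / real D) / of_nat D"
proof -
  have sq: "complex_of_real (sqrt (real D)) * complex_of_real (sqrt (real D)) = of_nat D"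
  proof -
    have "complex_of_real (sqrt (real D)) * complex_of_real (sqrt (real D)) = complex_of_real (sqrt (real D) * sqrt (real D))"
      by (rule of_real_mult[symmetric])
    also have "sqrt (real D) * sqrt (real D) = real D" by simp
    finally show ?thesis by simp
  qed
  have ang: "- 2 * pi * real p * real a / real D + 2 * pi * real p * real b / real D
       = 2 * pi * real_of_int (int b - int a) * real p / real D"
    using D by (simp add: field_simps)
  have "E D p a * cnj (E D p b) = cis (- 2 * pi * real p * real a / real D) * cis (2 * pi * real p * real b / real D)
        / (complex_of_real (sqrt (real D)) * complex_of_real (sqrt (real D)))"
    by (simp add: E_def cis_cnj)
  also have "\<dots> = cis (2 * pi * real_of_int (int b - int a) * real p / real D) / of_nat D"
    by (simp only: cis_mult ang sq)
  finally show ?thesis .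
qed

lemma E_orth:
  assumes D: "D > 0" and a: "a < D" and b: "b < D"
  shows "(\<Sum>p<D. E D p a * cnj (E D p b)) = (if a = b then 1 else 0)"
proof -
  have "(\<Sum>p<D. E D p a * cnj (E D p b)) =
     (\<Sum>p<D. cis (2 * pi * real_of_int (int b - int a) * real p / real D)) / of_nat D"
    by (simp only: E_prod[OF D] sum_divide_distrib)
  also have "\<dots> = (if a = b then 1 else 0)"
  proof (cases "a = b")
    case True then show ?thesis using D by simp
  next
    case False
    have "\<not> int D dvd (int b - int a)"
    proof
      assume "int D dvd (int b - int a)"
      then obtain k where k: "int b - int a = int D * k" by blast
      have "k = 0"
      proof (rule ccontr)
        assume "k \<noteq> 0"
        then have "k \<ge> 1 \<or> k \<le> -1" by linarith
        then show False
        proof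
          assume "k \<ge> 1"
          then have "int D * k \<ge> int D" using mult_left_mono[of 1 k "int D"] by simp
          then show False using k a b by linarith
        next
          assume "k \<le> -1"
          then have "int D * k \<le> - int D" using mult_left_mono[of k "-1" "int D"] by simp
          then show False using k a b by linarith
        qed
      qed
      then show False using k False by simp
    qed
    then have "(\<Sum>p<D. cis (2 * pi * real_of_int (int b - int a) * real p / real D)) = 0"
      by (rule geo_zero[OF D])
    then show ?thesis using False by (simp only: if_False div_0)
  qed
  finally show ?thesis .
qed



lemma E_mod:
  assumes D: "D > 0"
  shows "E D p (n mod D) = E D p n"
proof -
  have rn: "real n = real (n mod D) + real D * real (n div D)"
  proof -
    have e: "n mod D + D * (n div D) = n" by (rule mod_mult_div_eq)
    have "real n = real (n mod D + D * (n div D))" by (simp only: e)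
    also have "\<dots> = real (n mod D) + real D * real (n div D)" by (simp only: of_nat_add of_nat_mult)
    finally show ?thesis .
  qed
  have "- 2 * pi * real p * real n / real D =
        - 2 * pi * real p * real (n mod D) / real D + 2 * pi * real_of_int (- (int p * int (n div D)))"
    using D by (simp add: rn field_simps)
  then have "cis (- 2 * pi * real p * real n / real D) = cis (- 2 * pi * real p * real (n mod D) / real D)"
    by (simp only: cis_shift_int)
  then show ?thesis by (simp add: E_def)
qed

lemma E_add:
  "E D p (d + k) = E D p d * cis (- 2 * pi * real p * real k / real D)"
proof -
  have "- 2 * pi * real p * real (d + k) / real D =
        (- 2 * pi * real p * real d + - 2 * pi * real p * real k) / real D"
    by (simp add: algebra_simps)
  also have "\<dots> = - 2 * pi * real p * real d / real D + - 2 * pi * real p * real k / real D"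
    by (rule add_divide_distrib)
  finally have "- 2 * pi * real p * real (d + k) / real D =
        - 2 * pi * real p * real d / real D + - 2 * pi * real p * real k / real D" .
  then have "E D p (d + k) = cis (- 2 * pi * real p * real d / real D + - 2 * pi * real p * real k / real D)
      / complex_of_real (sqrt (real D))" by (simp only: E_def)
  also have "\<dots> = cis (- 2 * pi * real p * real d / real D) * cis (- 2 * pi * real p * real k / real D)
      / complex_of_real (sqrt (real D))" by (simp only: cis_mult)
  finally show ?thesis by (simp add: E_def)
qed

lemma cnj_E: "cnj (E D p k) = cis (2 * pi * real p * real k / real D) / complex_of_real (sqrt (real D))"
  by (simp add: E_def cis_cnj)

lemma sum_rot:
  assumes D: "(D::nat) > 0"
  shows "(\<Sum>d<D. g ((d + k) mod D)) = (\<Sum>m<D. g m)"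
proof -
  let ?f = "\<lambda>d. (d + k) mod D"
  have inj: "inj_on ?f {..<D}"
  proof
    fix x y assume x: "x \<in> {..<D}" and y: "y \<in> {..<D}" and e: "?f x = ?f y"
    have e': "(x + k) mod D = (y + k) mod D" using e by simp
    have key: "b = a" if ab: "a \<le> b" "a < D" "b < D" "(b + k) mod D = (a + k) mod D" for a b
    proof -
      obtain s where s: "b + k = a + k + D * s"
        by (rule mod_eq_nat1E[OF ab(4)]) (use ab(1) in simp)
      then have bs: "b = a + D * s" by simp
      have "s = 0"
      proof (rule ccontr)
        assume "s \<noteq> 0"
        then have "D \<le> D * s" by simp
        then show False using bs ab(3) by linarith
      qed
      then show ?thesis using bs by simp
    qed
    show "x = y"
    proof (cases "x \<le> y")
      case True
      then show ?thesis using key[of x y] x y e' by simp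
    next
      case False
      then show ?thesis using key[of y x] x y e' by simp
    qed
  qed
  have sub: "?f ` {..<D} \<subseteq> {..<D}" using D by auto
  have img: "?f ` {..<D} = {..<D}"
    by (rule endo_inj_surj) (use inj sub in auto)
  have "(\<Sum>m<D. g m) = (\<Sum>m\<in>?f ` {..<D}. g m)" by (simp only: img)
  also have "\<dots> = (\<Sum>d<D. g (?f d))" by (simp add: sum.reindex[OF inj])
  finally show ?thesis by simp
qed

lemma dft_conv:
  assumes D: "D > 0"
  shows "dft D (cvec (conv D h v)) p = dft D (cvec h) p * cnj (dft D (cvec v) p)"
proof -
  let ?s = "complex_of_real (sqrt (real D))"
  let ?c = "\<lambda>k. cis (2 * pi * real p * real k / real D)"
  have inner: "(\<Sum>d<D. E D p d * complex_of_real (h ((d + k) mod D))) = ?c k * dft D (cvec h) p" for k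
  proof -
    have h1: "?c k * cis (- 2 * pi * real p * real k / real D) = 1"
      by (simp add: cis_mult)
    have rel: "E D p d = ?c k * E D p ((d + k) mod D)" for d
    proof -
      have "?c k * E D p ((d + k) mod D) = ?c k * (E D p d * cis (- 2 * pi * real p * real k / real D))"
        by (simp only: E_mod[OF D] E_add)
      also have "\<dots> = E D p d * (?c k * cis (- 2 * pi * real p * real k / real D))"
        by (simp only: mult_ac)
      also have "\<dots> = E D p d" by (simp only: h1 mult_1_right)
      finally show ?thesis by (rule sym)
    qed
    have "(\<Sum>d<D. E D p d * complex_of_real (h ((d + k) mod D))) =
        (\<Sum>d<D. ?c k * (E D p ((d + k) mod D) * complex_of_real (h ((d + k) mod D))))"
      by (rule sum.cong[OF refl], subst rel, simp only: mult.assoc)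
    also have "\<dots> = ?c k * (\<Sum>d<D. E D p ((d + k) mod D) * complex_of_real (h ((d + k) mod D)))"
      by (simp only: sum_distrib_left)
    also have "(\<Sum>d<D. E D p ((d + k) mod D) * complex_of_real (h ((d + k) mod D))) = dft D (cvec h) p"
      using sum_rot[OF D, of "\<lambda>m. E D p m * complex_of_real (h m)" k]
      by (simp add: dft_E cvec_def)
    finally show ?thesis .
  qed
  have "dft D (cvec (conv D h v)) p =
     (\<Sum>d<D. E D p d * ((1 / ?s) * (\<Sum>k<D. complex_of_real (v k) * complex_of_real (h ((d + k) mod D)))))"
    by (simp add: dft_E cvec_def conv_def)
  also have "\<dots> = (\<Sum>d<D. \<Sum>k<D. complex_of_real (v k) / ?s * (E D p d * complex_of_real (h ((d + k) mod D))))"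
    by (intro sum.cong refl) (simp add: sum_distrib_left mult_ac)
  also have "\<dots> = (\<Sum>k<D. \<Sum>d<D. complex_of_real (v k) / ?s * (E D p d * complex_of_real (h ((d + k) mod D))))"
    by (rule sum.swap)
  also have "\<dots> = (\<Sum>k<D. complex_of_real (v k) / ?s * (\<Sum>d<D. E D p d * complex_of_real (h ((d + k) mod D))))"
    by (simp only: sum_distrib_left)
  also have "\<dots> = (\<Sum>k<D. complex_of_real (v k) / ?s * ?c k) * dft D (cvec h) p"
  proof -
    have "(\<Sum>k<D. complex_of_real (v k) / ?s * (\<Sum>d<D. E D p d * complex_of_real (h ((d + k) mod D))))
       = (\<Sum>k<D. (complex_of_real (v k) / ?s * ?c k) * dft D (cvec h) p)"
      by (rule sum.cong[OF refl], simp only: inner mult.assoc)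
    also have "\<dots> = (\<Sum>k<D. complex_of_real (v k) / ?s * ?c k) * dft D (cvec h) p"
      by (rule sum_distrib_right[symmetric])
    finally show ?thesis .
  qed
  also have "(\<Sum>k<D. complex_of_real (v k) / ?s * ?c k) = cnj (dft D (cvec v) p)"
    by (simp add: dft_E cvec_def cnj_E mult_ac)
  finally show ?thesis by (simp add: mult.commute)
qed

lemma dft_chain:
  assumes D: "D > 0"
  shows "dft D (cvec (conv_chain D x u k)) p =
         dft D (cvec x) p * (\<Prod>l\<in>{1..k}. cnj (dft D (cvec (u l)) p))"
proof (induction k)
  case 0 then show ?case by simp
next
  case (Suc k)
  then show ?case by (simp add: dft_conv[OF D] prod.cl_ivl_Suc mult_ac)
qed

lemma parseval:
  assumes D: "D > 0"
  shows "complex_of_real (\<Sum>d<D. f d * g d) = (\<Sum>p<D. dft D (cvec f) p * cnj (dft D (cvec g) p))"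
proof -
  have a1: "dft D (cvec f) p * cnj (dft D (cvec g) p) = (\<Sum>d<D. \<Sum>e<D. (E D p d * complex_of_real (f d)) * (cnj (E D p e) * complex_of_real (g e)))" for p
    by (simp add: dft_E cvec_def sum_product)
  have a3: "(\<Sum>p<D. (E D p d * complex_of_real (f d)) * (cnj (E D p e) * complex_of_real (g e))) = complex_of_real (f d) * complex_of_real (g e) * (\<Sum>p<D. E D p d * cnj (E D p e))" for d e
    by (subst sum_distrib_left) (rule sum.cong, simp_all add: ac_simps)
  have a5: "(\<Sum>d<D. (if d = e then complex_of_real (f d) * complex_of_real (g e) else 0)) = complex_of_real (f e) * complex_of_real (g e)" if "e < D" for e
    using that by (subst sum.delta) simp_all
  have "(\<Sum>p<D. dft D (cvec f) p * cnj (dft D (cvec g) p)) =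
        (\<Sum>p<D. \<Sum>d<D. \<Sum>e<D. (E D p d * complex_of_real (f d)) * (cnj (E D p e) * complex_of_real (g e)))"
    by (simp only: a1)
  also have "\<dots> = (\<Sum>d<D. \<Sum>e<D. \<Sum>p<D. (E D p d * complex_of_real (f d)) * (cnj (E D p e) * complex_of_real (g e)))"
    by (subst sum.swap) (rule sum.cong[OF refl], rule sum.swap)
  also have "\<dots> = (\<Sum>d<D. \<Sum>e<D. complex_of_real (f d) * complex_of_real (g e) * (\<Sum>p<D. E D p d * cnj (E D p e)))"
    by (simp only: a3)
  also have "\<dots> = (\<Sum>d<D. \<Sum>e<D. (if d = e then complex_of_real (f d) * complex_of_real (g e) else 0))"
    by (intro sum.cong refl) (simp add: E_orth[OF D])
  also have "\<dots> = (\<Sum>e<D. \<Sum>d<D. (if d = e then complex_of_real (f d) * complex_of_real (g e) else 0))"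
    by (rule sum.swap)
  also have "\<dots> = (\<Sum>e<D. complex_of_real (f e) * complex_of_real (g e))"
    by (intro sum.cong refl) (simp add: a5)
  also have "\<dots> = complex_of_real (\<Sum>d<D. f d * g d)"
    by simp
  finally show ?thesis by (rule sym)
qed



lemma pred_formula:
  assumes D: "D > 0" and L: "L \<ge> 1"
  shows "complex_of_real (pconv_inner D L x u) =
    (\<Sum>p<D. dft D (cvec x) p * (\<Prod>l\<in>{1..L}. cnj (dft D (cvec (u l)) p)))"
proof -
  have LL: "L = Suc (L - 1)" using L by simp
  have pr: "(\<Prod>l\<in>{1..L}. cnj (dft D (cvec (u l)) p)) =
      (\<Prod>l\<in>{1..L-1}. cnj (dft D (cvec (u l)) p)) * cnj (dft D (cvec (u L)) p)" for p
  proof -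
    have "{1..L} = insert L {1..L-1}" using L by auto
    then show ?thesis using L by (simp add: mult.commute)
  qed
  show ?thesis
    unfolding pconv_inner_def parseval[OF D] dft_chain[OF D] pr by (simp add: mult_ac)
qed

lemma dft_upd:
  assumes d: "d < D"
  shows "dft D (cvec ((f::nat\<Rightarrow>real)(d := f d + s))) q = dft D (cvec f) q + complex_of_real s * E D q d"
proof -
  have "dft D (cvec (f(d := f d + s))) q = (\<Sum>k<D. E D q k * complex_of_real (f k) + E D q k * (if k = d then complex_of_real s else 0))"
    unfolding dft_E cvec_def by (intro sum.cong refl) (auto simp: algebra_simps)
  also have "\<dots> = (\<Sum>k<D. E D q k * complex_of_real (f k)) + (\<Sum>k<D. E D q k * (if k = d then complex_of_real s else 0))"
    by (rule sum.distrib)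
  also have "(\<Sum>k<D. E D q k * (if k = d then complex_of_real s else 0)) = (\<Sum>k<D. if k = d then E D q k * complex_of_real s else 0)"
    by (rule sum.cong) simp_all
  also have "\<dots> = E D q d * complex_of_real s"
    using d by (subst sum.delta) simp_all
  also have "(\<Sum>k<D. E D q k * complex_of_real (f k)) = dft D (cvec f) q"
    by (simp add: dft_E cvec_def)
  finally show ?thesis by (simp only: mult.commute)
qed

lemma pert:
  fixes x :: "nat \<Rightarrow> real" and u :: "nat \<Rightarrow> nat \<Rightarrow> real"
  assumes D: "D > 0" and L: "L \<ge> 1" and l: "l \<in> {1..L}" and d: "d < D"
  defines "a \<equiv> avec D L (dft D (cvec x)) (\<lambda>l'. dft D (cvec (u l'))) l"
  shows "complex_of_real (pconv_inner D L x (u(l := (u l)(d := u l d + s)))) =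
    (\<Sum>q<D. cnj (dft D (cvec (u l)) q) * a q) + complex_of_real s * (\<Sum>q<D. cnj (E D q d) * a q)"
proof -
  let ?u' = "u(l := (u l)(d := u l d + s))"
  have fin: "finite {1..L}" by simp
  have pr: "(\<Prod>l'\<in>{1..L}. cnj (dft D (cvec (?u' l')) q)) =
     (cnj (dft D (cvec (u l)) q) + complex_of_real s * cnj (E D q d)) * (\<Prod>l'\<in>{1..L} - {l}. cnj (dft D (cvec (u l')) q))" for q
  proof -
    have "(\<Prod>l'\<in>{1..L}. cnj (dft D (cvec (?u' l')) q)) =
          cnj (dft D (cvec (?u' l)) q) * (\<Prod>l'\<in>{1..L} - {l}. cnj (dft D (cvec (?u' l')) q))"
      by (rule prod.remove[OF fin l])
    also have "(\<Prod>l'\<in>{1..L} - {l}. cnj (dft D (cvec (?u' l')) q)) = (\<Prod>l'\<in>{1..L} - {l}. cnj (dft D (cvec (u l')) q))"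
      by (intro prod.cong refl) auto
    also have "cnj (dft D (cvec (?u' l)) q) = cnj (dft D (cvec (u l)) q) + complex_of_real s * cnj (E D q d)"
      by (simp only: fun_upd_same dft_upd[OF d] complex_cnj_add complex_cnj_mult complex_cnj_complex_of_real)
    finally show ?thesis .
  qed
  have pw: "dft D (cvec x) q * ((cnj (dft D (cvec (u l)) q) + complex_of_real s * cnj (E D q d)) * (\<Prod>l'\<in>{1..L} - {l}. cnj (dft D (cvec (u l')) q)))
     = cnj (dft D (cvec (u l)) q) * a q + complex_of_real s * (cnj (E D q d) * a q)" for q
    unfolding a_def avec_def by (simp add: algebra_simps)
  show ?thesis
    unfolding pred_formula[OF D L] pr pw sum.distrib sum_distrib_left ..
qed



lemma lin:
  fixes x :: "nat \<Rightarrow> real" and u :: "nat \<Rightarrow> nat \<Rightarrow> real"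
  assumes D: "D > 0" and L: "L \<ge> 1" and l: "l \<in> {1..L}" and d: "d < D"
  shows "complex_of_real (pconv_inner D L x u) =
           (\<Sum>q<D. cnj (dft D (cvec (u l)) q) * avec D L (dft D (cvec x)) (\<lambda>l'. dft D (cvec (u l'))) l q)"
    and "complex_of_real (Re (\<Sum>q<D. cnj (E D q d) * avec D L (dft D (cvec x)) (\<lambda>l'. dft D (cvec (u l'))) l q))
           = (\<Sum>q<D. cnj (E D q d) * avec D L (dft D (cvec x)) (\<lambda>l'. dft D (cvec (u l'))) l q)"
    and "pconv_inner D L x (u(l := (u l)(d := u l d + s))) =
           pconv_inner D L x u + s * Re (\<Sum>q<D. cnj (E D q d) * avec D L (dft D (cvec x)) (\<lambda>l'. dft D (cvec (u l'))) l q)"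
proof -
  let ?P = "(\<Sum>q<D. cnj (dft D (cvec (u l)) q) * avec D L (dft D (cvec x)) (\<lambda>l'. dft D (cvec (u l'))) l q)"
  let ?C = "(\<Sum>q<D. cnj (E D q d) * avec D L (dft D (cvec x)) (\<lambda>l'. dft D (cvec (u l'))) l q)"
  have pe: "complex_of_real (pconv_inner D L x (u(l := (u l)(d := u l d + s)))) = ?P + complex_of_real s * ?C" for s
    using pert[OF D L l d, of x u s] by simp
  have e0: "u(l := (u l)(d := u l d + 0)) = u" by simp
  have p0: "complex_of_real (pconv_inner D L x u) = ?P"
    using pe[of 0] unfolding e0 by simp
  then show "complex_of_real (pconv_inner D L x u) = ?P" .
  have "complex_of_real (pconv_inner D L x (u(l := (u l)(d := u l d + 1)))) = ?P + ?C"
    using pe[of 1] by simp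
  then have cC: "?C = complex_of_real (pconv_inner D L x (u(l := (u l)(d := u l d + 1))) - pconv_inner D L x u)"
    using p0 by simp
  then show cR: "complex_of_real (Re ?C) = ?C" by simp
  have "complex_of_real (pconv_inner D L x u + s * Re ?C) =
        complex_of_real (pconv_inner D L x u) + complex_of_real s * complex_of_real (Re ?C)"
    by (simp only: of_real_add of_real_mult)
  also have "\<dots> = ?P + complex_of_real s * ?C" by (simp only: p0 cR)
  also have "\<dots> = complex_of_real (pconv_inner D L x (u(l := (u l)(d := u l d + s))))"
    by (rule pe[symmetric])
  finally have "complex_of_real (pconv_inner D L x (u(l := (u l)(d := u l d + s)))) =
        complex_of_real (pconv_inner D L x u + s * Re ?C)" by (rule sym)
  then show "pconv_inner D L x (u(l := (u l)(d := u l d + s))) = pconv_inner D L x u + s * Re ?C"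
    by (simp only: of_real_eq_iff)
qed

lemma grad_formula:
  assumes D: "D > 0" and L: "L \<ge> 1" and l: "l \<in> {1..L}" and d: "d < D"
    and diff: "\<forall>y z. (\<lambda>w. lossf w y) differentiable (at z)"
  shows "grad_conv lossf N X Y D L u l d =
    (\<Sum>n=1..N. deriv (\<lambda>z. lossf z (Y n)) (pconv_inner D L (X n) u) *
        Re (\<Sum>q<D. cnj (E D q d) * avec D L (dft D (cvec (X n))) (\<lambda>l'. dft D (cvec (u l'))) l q))"
proof -
  define p where "p = (\<lambda>n. pconv_inner D L (X n) u)"
  define c where "c = (\<lambda>n. Re (\<Sum>q<D. cnj (E D q d) * avec D L (dft D (cvec (X n))) (\<lambda>l'. dft D (cvec (u l'))) l q))"
  have eq: "(\<lambda>s. loss_conv lossf N X Y D L (u(l := (u l)(d := u l d + s)))) =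
            (\<lambda>s. \<Sum>n=1..N. lossf (p n + s * c n) (Y n))"
    by (rule ext) (simp only: loss_conv_def lin(3)[OF D L l d] p_def c_def)
  have der: "((\<lambda>s. \<Sum>n=1..N. lossf (p n + s * c n) (Y n)) has_real_derivative
          (\<Sum>n=1..N. deriv (\<lambda>z. lossf z (Y n)) (p n) * c n)) (at 0)"
  proof (rule DERIV_sum)
    fix n
    have d1: "DERIV (\<lambda>z. lossf z (Y n)) (p n + 0 * c n) :> deriv (\<lambda>z. lossf z (Y n)) (p n)"
      using diff DERIV_deriv_iff_real_differentiable by simp
    have d2: "((\<lambda>s. p n + s * c n) has_real_derivative c n) (at 0)"
      by (auto intro!: derivative_eq_intros)
    show "((\<lambda>s. lossf (p n + s * c n) (Y n)) has_real_derivative deriv (\<lambda>z. lossf z (Y n)) (p n) * c n) (at 0)"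
      using DERIV_chain2[OF d1 d2] by simp
  qed
  have "grad_conv lossf N X Y D L u l d = (\<Sum>n=1..N. deriv (\<lambda>z. lossf z (Y n)) (p n) * c n)"
    unfolding grad_conv_def eq by (rule DERIV_imp_deriv[OF der])
  then show ?thesis by (simp only: p_def c_def)
qed

lemma inv_dft:
  assumes D: "D > 0" and p: "p < D"
  shows "(\<Sum>d<D. E D p d * (\<Sum>q<D. cnj (E D q d) * a q)) = a p"
proof -
  have "(\<Sum>d<D. E D p d * (\<Sum>q<D. cnj (E D q d) * a q)) = (\<Sum>d<D. \<Sum>q<D. a q * (E D d p * cnj (E D d q)))"
  proof (rule sum.cong[OF refl])
    fix d
    have "E D p d * (\<Sum>q<D. cnj (E D q d) * a q) = (\<Sum>q<D. a q * (E D p d * cnj (E D q d)))"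
      by (simp add: sum_distrib_left mult_ac)
    also have "\<dots> = (\<Sum>q<D. a q * (E D d p * cnj (E D d q)))"
      by (rule sum.cong[OF refl]) (simp only: E_sym[of D p d] E_sym[of D _ d])
    finally show "E D p d * (\<Sum>q<D. cnj (E D q d) * a q) = (\<Sum>q<D. a q * (E D d p * cnj (E D d q)))" .
  qed
  also have "\<dots> = (\<Sum>q<D. \<Sum>d<D. a q * (E D d p * cnj (E D d q)))"
    by (rule sum.swap)
  also have "\<dots> = (\<Sum>q<D. a q * (\<Sum>d<D. E D d p * cnj (E D d q)))"
    by (simp only: sum_distrib_left)
  also have "\<dots> = (\<Sum>q<D. if q = p then a p else 0)"
    by (rule sum.cong[OF refl]) (simp add: E_orth[OF D p])
  also have "\<dots> = a p" using p by (subst sum.delta) simp_all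
  finally show ?thesis .
qed



lemma dft_diff: "dft D (cvec (\<lambda>d. f d - g d)) p = dft D (cvec f) p - dft D (cvec g) p"
  by (simp add: dft_E cvec_def sum_subtractf algebra_simps)

lemma swap_helper:
  fixes e :: "nat \<Rightarrow> complex"
  shows "(\<Sum>d\<in>A. e d * (\<Sum>n\<in>B. g n * h n d)) = (\<Sum>n\<in>B. g n * (\<Sum>d\<in>A. e d * h n d))"
proof -
  have "(\<Sum>d\<in>A. e d * (\<Sum>n\<in>B. g n * h n d)) = (\<Sum>d\<in>A. \<Sum>n\<in>B. e d * (g n * h n d))"
    by (simp only: sum_distrib_left)
  also have "\<dots> = (\<Sum>n\<in>B. \<Sum>d\<in>A. e d * (g n * h n d))" by (rule sum.swap)
  also have "\<dots> = (\<Sum>n\<in>B. \<Sum>d\<in>A. g n * (e d * h n d))" by (simp only: mult.left_commute)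
  also have "\<dots> = (\<Sum>n\<in>B. g n * (\<Sum>d\<in>A. e d * h n d))" by (simp only: sum_distrib_left)
  finally show ?thesis .
qed

theorem lemma6:
  fixes lossf :: "real \<Rightarrow> real \<Rightarrow> real"
    and L D N :: nat
    and X :: "nat \<Rightarrow> nat \<Rightarrow> real"
    and Y :: "nat \<Rightarrow> real"
    and eta :: "nat \<Rightarrow> real"
    and u :: "nat \<Rightarrow> nat \<Rightarrow> nat \<Rightarrow> real"
  assumes "L \<ge> 1" and "D \<ge> 1"
    and "\<forall>n\<in>{1..N}. Y n \<in> {-1, 1}"
    and "\<forall>y z. (\<lambda>w. lossf w y) differentiable (at z)"
    and "\<forall>t. \<forall>l\<in>{1..L}. \<forall>d<D.
           u (Suc t) l d = u t l d - eta t * grad_conv lossf N X Y D L (u t) l d"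
  shows "\<forall>t. \<forall>l\<in>{1..L}. \<forall>p<D.
           dft D (cvec (\<lambda>d. u (Suc t) l d - u t l d)) p
             = dft D (cvec (u (Suc t) l)) p - dft D (cvec (u t l)) p
         \<and> dft D (cvec (u (Suc t) l)) p - dft D (cvec (u t l)) p
             = - complex_of_real (eta t) *
               grad_diag lossf N X Y D L (\<lambda>l'. dft D (cvec (u t l'))) l p"
proof (intro allI ballI impI conjI)
  have D: "D > 0" using assms(2) by simp
  have L: "L \<ge> 1" by (rule assms(1))
  note diff = assms(4)
  fix t l p
  assume l: "l \<in> {1..L}" and p: "p < D"
  show "dft D (cvec (\<lambda>d. u (Suc t) l d - u t l d)) p
             = dft D (cvec (u (Suc t) l)) p - dft D (cvec (u t l)) p"
    by (rule dft_diff)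
  let ?a = "\<lambda>n. avec D L (dft D (cvec (X n))) (\<lambda>l'. dft D (cvec (u t l'))) l"
  let ?g = "\<lambda>n. deriv (\<lambda>z. lossf z (Y n)) (pconv_inner D L (X n) (u t))"
  have step: "u (Suc t) l d - u t l d = - eta t * grad_conv lossf N X Y D L (u t) l d" if "d < D" for d
    using assms(5) l that by simp
  have e1: "dft D (cvec (u (Suc t) l)) p - dft D (cvec (u t l)) p = dft D (cvec (\<lambda>d. u (Suc t) l d - u t l d)) p"
    by (rule dft_diff[symmetric])
  have pt: "E D p d * complex_of_real (u (Suc t) l d - u t l d) =
      - complex_of_real (eta t) * (E D p d * (\<Sum>n=1..N. complex_of_real (?g n) * (\<Sum>q<D. cnj (E D q d) * ?a n q)))"
    if dD: "d < D" for d
  proof -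
    have "complex_of_real (grad_conv lossf N X Y D L (u t) l d) =
        (\<Sum>n=1..N. complex_of_real (?g n) * complex_of_real (Re (\<Sum>q<D. cnj (E D q d) * ?a n q)))"
      by (simp only: grad_formula[OF D L l dD diff] of_real_sum of_real_mult)
    also have "\<dots> = (\<Sum>n=1..N. complex_of_real (?g n) * (\<Sum>q<D. cnj (E D q d) * ?a n q))"
      by (simp only: lin(2)[OF D L l dD])
    finally have gr: "complex_of_real (grad_conv lossf N X Y D L (u t) l d) =
        (\<Sum>n=1..N. complex_of_real (?g n) * (\<Sum>q<D. cnj (E D q d) * ?a n q))" .
    show ?thesis
      by (simp only: step[OF dD] gr[symmetric]) simp
  qed
  have "dft D (cvec (\<lambda>d. u (Suc t) l d - u t l d)) p = (\<Sum>d<D. E D p d * complex_of_real (u (Suc t) l d - u t l d))"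
    by (simp only: dft_E cvec_def)
  also have "\<dots> = (\<Sum>d<D. - complex_of_real (eta t) * (E D p d *
      (\<Sum>n=1..N. complex_of_real (?g n) * (\<Sum>q<D. cnj (E D q d) * ?a n q))))"
    by (rule sum.cong[OF refl]) (rule pt, simp)
  also have "\<dots> = - complex_of_real (eta t) * (\<Sum>n=1..N. complex_of_real (?g n) *
        (\<Sum>d<D. E D p d * (\<Sum>q<D. cnj (E D q d) * ?a n q)))"
    by (subst sum_distrib_left[symmetric], rule arg_cong[where f = "\<lambda>z. - complex_of_real (eta t) * z"], rule swap_helper)
  also have "\<dots> = - complex_of_real (eta t) * (\<Sum>n=1..N. complex_of_real (?g n) * ?a n p)"
    by (simp only: inv_dft[OF D p])
  also have "(\<Sum>n=1..N. complex_of_real (?g n) * ?a n p) = grad_diag lossf N X Y D L (\<lambda>l'. dft D (cvec (u t l'))) l p"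
  proof -
    have "Re (\<Sum>q<D. cnj (dft D (cvec (u t l)) q) * ?a n q) = pconv_inner D L (X n) (u t)" for n
      using arg_cong[OF lin(1)[OF D L l p, of "X n" "u t"], of Re] by simp
    then show ?thesis by (simp add: grad_diag_def Let_def)
  qed
  finally show "dft D (cvec (u (Suc t) l)) p - dft D (cvec (u t l)) p
             = - complex_of_real (eta t) *
               grad_diag lossf N X Y D L (\<lambda>l'. dft D (cvec (u t l'))) l p" by (simp only: e1)
qed


end
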